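(* For every nonempty word $p\in\mathbb{P}^\ast$ with no immediate repetitions, $s(p)+s(p^{+1})=1$.
   Context: $\mathbb{P}$ denotes the positive integers and $\mathbb{P}^\ast$ the set of finite words over $\mathbb{P}$; $|p|$ is the length of $p$ and $p(i)$ its $i$th letter. The word $p^{+1}$ is defined by $p^{+1}(i)=p(i)+1$. A word $p$ has an immediate repetition if $p(i)=p(i+1)$ for some $i$. The infinite zigzag word is the concatenation $R_1R_2R_3\cdots$ of runs, where each odd-indexed run is the ascending sequence of all odd positive integers and each even-indexed run is the descending sequence of all even positive integers. A word $p$ occurs as a subsequence of the first $m$ runs if $p=q_1q_2\cdots q_m$ for (possibly empty) words $q_k$, where for odd $k$, $q_k$ is strictly increasing with odd letters, and for even $k$, $q_k$ is strictly decreasing with even letters. The score $s(p)$ is the least $m\ge 0$ such that $p$ occurs as a subsequence of the first $m$ runs, minus $|p|$. *)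

theory Defs
  imports Main
begin

text \<open>Words over the positive integers are lists of naturals with all letters \<ge> 1.
  Runs are indexed from 0 here: run index k (0-based) corresponds to R_(k+1);
  so even k = odd-indexed run (ascending odd numbers), odd k = even-indexed run
  (descending positive even numbers).\<close>

definition run_ok :: "nat \<Rightarrow> nat list \<Rightarrow> bool" where
  "run_ok k q \<longleftrightarrow>
     (if even k then sorted_wrt (<) q \<and> (\<forall>x\<in>set q. odd x)
      else sorted_wrt (>) q \<and> (\<forall>x\<in>set q. even x \<and> 0 < x))"

definition occurs_in_runs :: "nat list \<Rightarrow> nat \<Rightarrow> bool" where
  "occurs_in_runs p m \<longleftrightarrow>
     (\<exists>qs. length qs = m \<and> concat qs = p \<and> (\<forall>k<m. run_ok k (qs ! k)))"

definition score :: "nat list \<Rightarrow> int" where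
  "score p = int (LEAST m. occurs_in_runs p m) - int (length p)"

definition plus1 :: "nat list \<Rightarrow> nat list" where
  "plus1 p = map Suc p"

definition no_imm_rep :: "nat list \<Rightarrow> bool" where
  "no_imm_rep p \<longleftrightarrow> (\<forall>i. Suc i < length p \<longrightarrow> p ! i \<noteq> p ! Suc i)"

end

theory Submission
  imports Defs
begin

definition occ :: "nat \<Rightarrow> nat list \<Rightarrow> nat \<Rightarrow> bool" where
  "occ k p m \<longleftrightarrow> (\<exists>qs. length qs = m \<and> concat qs = p \<and> (\<forall>j<m. run_ok (k+j) (qs ! j)))"

definition occB :: "nat \<Rightarrow> nat list \<Rightarrow> nat \<Rightarrow> bool" where
  "occB k p m \<longleftrightarrow> (\<exists>q r. q \<noteq> [] \<and> p = q @ r \<and> run_ok k q \<and> occ (Suc k) r m)"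

definition ok :: "nat \<Rightarrow> nat \<Rightarrow> bool" where
  "ok k x \<longleftrightarrow> (if even k then odd x else even x \<and> 0 < x)"

definition mo :: "nat \<Rightarrow> nat \<Rightarrow> nat \<Rightarrow> bool" where
  "mo k x y \<longleftrightarrow> (if even k then x < y else y < x)"

definition tr :: "nat \<Rightarrow> nat \<Rightarrow> nat" where
  "tr x y = (if even x \<noteq> even y then 1 else if (odd x \<and> x < y) \<or> (even x \<and> y < x) then 0 else 2)"

fun D :: "nat list \<Rightarrow> nat" where
  "D (x # y # r) = tr x y + D (y # r)"
| "D _ = 0"

lemma occ_0: "occ k p 0 \<longleftrightarrow> p = []"
  unfolding occ_def by auto

lemma occ_Suc: "occ k p (Suc m) \<longleftrightarrow> (\<exists>q r. p = q @ r \<and> run_ok k q \<and> occ (Suc k) r m)"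
proof
  assume "occ k p (Suc m)"
  then obtain qs where h: "length qs = Suc m" "concat qs = p" "\<forall>j<Suc m. run_ok (k+j) (qs ! j)"
    unfolding occ_def by blast
  then obtain q qs' where qs: "qs = q # qs'" by (cases qs) auto
  have "occ (Suc k) (concat qs') m" unfolding occ_def
  proof (intro exI[of _ qs'] conjI allI impI)
    fix j assume "j < m"
    then have "run_ok (k + Suc j) (qs ! Suc j)" using h(3) by blast
    then show "run_ok (Suc k + j) (qs' ! j)" using qs by simp
  qed (use h qs in auto)
  moreover have "run_ok k q" using h(3) qs by (metis add_0_right nth_Cons_0 zero_less_Suc)
  ultimately show "\<exists>q r. p = q @ r \<and> run_ok k q \<and> occ (Suc k) r m" using h qs by auto
next
  assume "\<exists>q r. p = q @ r \<and> run_ok k q \<and> occ (Suc k) r m"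
  then obtain q r qs where h: "p = q @ r" "run_ok k q" "length qs = m" "concat qs = r"
     "\<forall>j<m. run_ok (Suc k+j) (qs ! j)" unfolding occ_def by blast
  show "occ k p (Suc m)" unfolding occ_def
  proof (intro exI[of _ "q # qs"] conjI allI impI)
    fix j assume "j < Suc m"
    then show "run_ok (k + j) ((q # qs) ! j)" using h by (cases j) auto
  qed (use h in auto)
qed

lemma occ_nil: "occ k [] m"
  unfolding occ_def by (intro exI[of _ "replicate m []"]) (auto simp: run_ok_def)

lemma run_ok_Cons: "run_ok k (x # q) \<longleftrightarrow> ok k x \<and> run_ok k q \<and> (q \<noteq> [] \<longrightarrow> mo k x (hd q))"
proof (cases q)
  case Nil then show ?thesis by (auto simp: run_ok_def ok_def)
next
  case (Cons y q')
  show ?thesis unfolding Cons run_ok_def ok_def mo_def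
    by (cases "even k") (auto simp add: sorted_wrt2 transp_def)
qed

lemma occ_Suc_Cons: "occ k (x # rest) (Suc m) \<longleftrightarrow> occB k (x # rest) m \<or> occ (Suc k) (x # rest) m"
proof
  assume "occ k (x # rest) (Suc m)"
  then obtain q r where h: "x # rest = q @ r" "run_ok k q" "occ (Suc k) r m"
    unfolding occ_Suc by blast
  show "occB k (x # rest) m \<or> occ (Suc k) (x # rest) m"
  proof (cases "q = []")
    case True then show ?thesis using h by simp
  next
    case False then show ?thesis using h unfolding occB_def by blast
  qed
next
  assume "occB k (x # rest) m \<or> occ (Suc k) (x # rest) m"
  moreover have "run_ok k []" by (simp add: run_ok_def)
  ultimately show "occ k (x # rest) (Suc m)"
    unfolding occ_Suc occB_def by (metis append_Nil)
qed

lemma occB_Cons: "occB k (x # rest) m \<longleftrightarrow> ok k x \<and> (occ (Suc k) rest m \<or> (rest \<noteq> [] \<and> mo k x (hd rest) \<and> occB k rest m))"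
proof
  assume "occB k (x # rest) m"
  then obtain q r where h: "q \<noteq> []" "x # rest = q @ r" "run_ok k q" "occ (Suc k) r m"
    unfolding occB_def by blast
  then obtain q' where q: "q = x # q'" "rest = q' @ r" by (cases q) auto
  show "ok k x \<and> (occ (Suc k) rest m \<or> (rest \<noteq> [] \<and> mo k x (hd rest) \<and> occB k rest m))"
  proof (cases "q' = []")
    case True then show ?thesis using h q run_ok_Cons by auto
  next
    case False
    then have "occB k rest m" unfolding occB_def using h q run_ok_Cons by blast
    then show ?thesis using h q run_ok_Cons False by auto
  qed
next
  assume a: "ok k x \<and> (occ (Suc k) rest m \<or> (rest \<noteq> [] \<and> mo k x (hd rest) \<and> occB k rest m))"
  show "occB k (x # rest) m"
  proof (cases "occ (Suc k) rest m")
    case True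
    have "[x] \<noteq> [] \<and> x # rest = [x] @ rest \<and> run_ok k [x] \<and> occ (Suc k) rest m"
      using a True by (auto simp: run_ok_Cons run_ok_def ok_def)
    then show ?thesis unfolding occB_def by blast
  next
    case False
    then obtain q r where h: "rest \<noteq> []" "mo k x (hd rest)" "q \<noteq> []" "rest = q @ r" "run_ok k q" "occ (Suc k) r m"
      using a unfolding occB_def by blast
    then have "x # q \<noteq> [] \<and> x # rest = (x # q) @ r \<and> run_ok k (x # q) \<and> occ (Suc k) r m"
      using a by (auto simp: run_ok_Cons)
    then show ?thesis unfolding occB_def by blast
  qed
qed

lemma main_char:
  "\<forall>z\<in>set (x # rest). 0 < z \<Longrightarrow>
   (\<forall>k m. occB k (x # rest) m \<longleftrightarrow> ok k x \<and> D (x # rest) \<le> m) \<and>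
   (\<forall>k m. occ k (x # rest) m \<longleftrightarrow> (if ok k x then 1 else 2) + D (x # rest) \<le> m)"
proof (induction rest arbitrary: x)
  case Nil
  have B: "occB k [x] m \<longleftrightarrow> ok k x \<and> D [x] \<le> m" for k m
    by (simp add: occB_Cons occ_nil)
  have "occ k [x] m \<longleftrightarrow> (if ok k x then 1 else 2) + D [x] \<le> m" for k m
  proof (induction m arbitrary: k)
    case 0 then show ?case by (simp add: occ_0)
  next
    case (Suc m)
    show ?case using Nil.prems unfolding occ_Suc_Cons B Suc.IH by (auto simp: ok_def)
  qed
  then show ?case using B by blast
next
  case (Cons y r)
  from Cons.prems have pos: "\<forall>z\<in>set (y # r). 0 < z" "0 < x" by auto
  note IH = Cons.IH[OF pos(1)]
  have "0 < y" using pos by simp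
  have B: "occB k (x # y # r) m \<longleftrightarrow> ok k x \<and> D (x # y # r) \<le> m" for k m
  proof -
    have s: "occB k (x # y # r) m \<longleftrightarrow> ok k x \<and> (occ (Suc k) (y # r) m \<or> (mo k x y \<and> occB k (y # r) m))"
      using occB_Cons[of k x "y # r" m] by simp
    have i1: "occ (Suc k) (y # r) m \<longleftrightarrow> (if ok (Suc k) y then 1 else 2) + D (y # r) \<le> m"
      using IH by blast
    have i2: "occB k (y # r) m \<longleftrightarrow> ok k y \<and> D (y # r) \<le> m"
      using IH by blast
    show ?thesis unfolding s i1 i2 using pos(2) \<open>0 < y\<close>
      by (cases "even k"; cases "even x"; cases "even y"; cases "x < y")
         (simp_all add: ok_def mo_def tr_def, linarith+)
  qed
  have "occ k (x # y # r) m \<longleftrightarrow> (if ok k x then 1 else 2) + D (x # y # r) \<le> m" for k m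
  proof (induction m arbitrary: k)
    case 0 then show ?case by (simp add: occ_0)
  next
    case (Suc m)
    show ?case unfolding occ_Suc_Cons B Suc.IH using pos by (auto simp: ok_def)
  qed
  then show ?case using B by blast
qed

lemma no_imm_rep_Cons: "no_imm_rep (x # y # r) \<Longrightarrow> x \<noteq> y \<and> no_imm_rep (y # r)"
  unfolding no_imm_rep_def
  by (metis Suc_less_eq length_Cons nth_Cons_0 nth_Cons_Suc zero_less_Suc)

lemma D_sum: "no_imm_rep p \<Longrightarrow> D p + D (map Suc p) = 2 * (length p - 1)"
proof (induction p rule: D.induct)
  case (1 x y r)
  then have "x \<noteq> y" "D (y # r) + D (map Suc (y # r)) = 2 * (length (y # r) - 1)"
    using no_imm_rep_Cons by blast+
  then show ?case by (auto simp: tr_def)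
qed auto

lemma score_eq:
  assumes "p = x # rest" "\<forall>z\<in>set p. 0 < z"
  shows "score p = int ((if odd x then 1 else 2) + D p) - int (length p)"
proof -
  have e: "occurs_in_runs p m = occ 0 p m" for m
    unfolding occurs_in_runs_def occ_def by simp
  have c: "occ 0 p m \<longleftrightarrow> (if odd x then 1 else 2) + D p \<le> m" for m
    using main_char[of x rest] assms by (auto simp: ok_def)
  have "(LEAST m. occurs_in_runs p m) = (if odd x then 1 else 2) + D p"
    unfolding e c by (rule Least_equality) auto
  then show ?thesis unfolding score_def by simp
qed

theorem mainTheorem2:
  fixes p :: "nat list"
  assumes "p \<noteq> []"
    and "\<forall>x\<in>set p. 0 < x"
    and "no_imm_rep p"
  shows "score p + score (plus1 p) = 1"
proof -
  obtain x rest where p: "p = x # rest" using assms(1) by (cases p) auto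
  have s1: "score p = int ((if odd x then 1 else 2) + D p) - int (length p)"
    using score_eq[OF p assms(2)] .
  have s2: "score (plus1 p) = int ((if odd (Suc x) then 1 else 2) + D (map Suc p)) - int (length p)"
    using score_eq[of "plus1 p" "Suc x" "map Suc rest"] p by (auto simp: plus1_def)
  have "D p + D (map Suc p) = 2 * (length p - 1)" using D_sum assms(3) .
  then show ?thesis using s1 s2 p by auto
qed

end
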